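(* Fix an episode $k\ge1$ of algorithm IHMDP-VCG and condition on $\mathcal F^{[k-1]}$, the $\sigma$-algebra of all events up to the end of episode $k-1$. Let $\nu^{[k]}$ be the stationary distribution of the Markov chain on $\mathcal S$ with transition matrix $P^{\pi^{[k]}}(s'|s)=\sum_a P(s'|s,a)\pi^{[k]}(a|s)$, and $\rho^{[k]}(s,a)=\nu^{[k]}(s)\pi^{[k]}(a|s)$. For a round $t$ of episode $k$, let $\mathbb E[\nu^t](s)=\Pr(s^t=s\mid\mathcal F^{[k-1]})$ and $\mathbb E[\rho^t](s,a)=\mathbb E[\nu^t](s)\pi^{[k]}(a|s)$. Then for every round $t$ in the stationary phase of episode $k$, $\|\mathbb E[\rho^t]-\rho^{[k]}\|_1=\|\mathbb E[\nu^t]-\nu^{[k]}\|_1\le 2/\sqrt k$.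
   Context: $\mathcal S,\mathcal A$ finite, $S=|\mathcal S|$, $P$ a transition kernel with $P(s'|s,a)\ge\alpha>0$ for all $s,s',a$; states evolve by $s^{t+1}\sim P(\cdot|s^t,a^t)$. In algorithm IHMDP-VCG, time is divided into episodes $k=1,2,\dots$; episode $k$ starts at round $\tau^{[k]}$ and consists of a mixing phase of $d^{[k]}=\frac{\log k}{\alpha S}$ rounds (rounds $\tau^{[k]},\dots,\tau^{[k]}+d^{[k]}-1$) followed by a stationary phase (subsequent rounds of the episode). A stationary policy $\pi^{[k]}$, determined by the history up to the end of episode $k-1$, is used to draw $a^t\sim\pi^{[k]}(\cdot|s^t)$ in every round $t$ of episode $k$ (both phases). *)

theory Defs
  imports "HOL-Probability.Probability"
begin

definition policy_kernel :: "('s \<Rightarrow> 'a \<Rightarrow> 's pmf) \<Rightarrow> ('s \<Rightarrow> 'a pmf) \<Rightarrow> 's \<Rightarrow> 's pmf" where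
  "policy_kernel P pol s = bind_pmf (pol s) (\<lambda>a. P s a)"

definition dist_step :: "('s \<Rightarrow> 'a \<Rightarrow> 's pmf) \<Rightarrow> ('s \<Rightarrow> 'a pmf) \<Rightarrow> 's pmf \<Rightarrow> 's pmf" where
  "dist_step P pol mu = bind_pmf mu (policy_kernel P pol)"

definition stationary_dist :: "('s \<Rightarrow> 'a \<Rightarrow> 's pmf) \<Rightarrow> ('s \<Rightarrow> 'a pmf) \<Rightarrow> 's pmf \<Rightarrow> bool" where
  "stationary_dist P pol nu \<longleftrightarrow> dist_step P pol nu = nu"

text \<open>E[nu^t]: conditional law (given F^{[k-1]}) of the state at round t of episode k,
  where mu0 is the conditional law of the state s^{tau} at the first round tau of the episode
  and the policy pi^{[k]} is used in every round of the episode.\<close>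
definition cond_state_dist :: "('s \<Rightarrow> 'a \<Rightarrow> 's pmf) \<Rightarrow> ('s \<Rightarrow> 'a pmf) \<Rightarrow> 's pmf \<Rightarrow> nat \<Rightarrow> nat \<Rightarrow> 's pmf" where
  "cond_state_dist P pol mu0 tau t = (dist_step P pol ^^ (t - tau)) mu0"

definition occupancy :: "'s pmf \<Rightarrow> ('s \<Rightarrow> 'a pmf) \<Rightarrow> 's \<Rightarrow> 'a \<Rightarrow> real" where
  "occupancy nu pol s a = pmf nu s * pmf (pol s) a"

end

theory Submission
  imports Defs
begin

lemma pmf_bind_fin:
  fixes mu :: "'s::finite pmf"
  shows "pmf (bind_pmf mu K) x = (\<Sum>s\<in>UNIV. pmf mu s * pmf (K s) x)"
  unfolding pmf_bind by (subst integral_measure_pmf_real[where A=UNIV]) (auto simp: mult.commute)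

lemma sum_pmf_univ: "(\<Sum>s\<in>(UNIV::'s::finite set). pmf mu s) = 1"
  by (rule sum_pmf_eq_1) auto

lemma kernel_lower:
  fixes P :: "'s::finite \<Rightarrow> 'a::finite \<Rightarrow> 's pmf"
  assumes "\<forall>s a s'. pmf (P s a) s' \<ge> alpha"
  shows "pmf (policy_kernel P pol s) s' \<ge> alpha"
proof -
  have "pmf (policy_kernel P pol s) s' = (\<Sum>a\<in>UNIV. pmf (pol s) a * pmf (P s a) s')"
    unfolding policy_kernel_def by (rule pmf_bind_fin)
  also have "\<dots> \<ge> (\<Sum>a\<in>UNIV. pmf (pol s) a * alpha)"
    by (rule sum_mono) (use assms in \<open>auto intro: mult_left_mono\<close>)
  also have "(\<Sum>a\<in>UNIV. pmf (pol s) a * alpha) = alpha"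
    by (simp add: sum_distrib_right[symmetric] sum_pmf_univ)
  finally show ?thesis .
qed

lemma contraction:
  fixes K :: "'s::finite \<Rightarrow> 's pmf"
  assumes low: "\<And>s x. pmf (K s) x \<ge> alpha"
  shows "(\<Sum>x\<in>UNIV. \<bar>pmf (bind_pmf mu K) x - pmf (bind_pmf nu K) x\<bar>)
     \<le> (1 - real CARD('s) * alpha) * (\<Sum>s\<in>UNIV. \<bar>pmf mu s - pmf nu s\<bar>)"
proof -
  define d where "d s = pmf mu s - pmf nu s" for s
  have d0: "(\<Sum>s\<in>UNIV. d s) = 0"
    by (simp add: d_def sum_subtractf sum_pmf_univ)
  have eq: "pmf (bind_pmf mu K) x - pmf (bind_pmf nu K) x = (\<Sum>s\<in>UNIV. d s * (pmf (K s) x - alpha))" for x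
  proof -
    have "pmf (bind_pmf mu K) x - pmf (bind_pmf nu K) x = (\<Sum>s\<in>UNIV. d s * pmf (K s) x)"
      by (simp add: pmf_bind_fin d_def sum_subtractf left_diff_distrib)
    also have "\<dots> = (\<Sum>s\<in>UNIV. d s * (pmf (K s) x - alpha)) + (\<Sum>s\<in>UNIV. d s) * alpha"
      by (simp add: sum_distrib_right right_diff_distrib sum_subtractf)
    finally show ?thesis using d0 by simp
  qed
  have "(\<Sum>x\<in>UNIV. \<bar>pmf (bind_pmf mu K) x - pmf (bind_pmf nu K) x\<bar>)
      \<le> (\<Sum>x\<in>UNIV. \<Sum>s\<in>UNIV. \<bar>d s\<bar> * (pmf (K s) x - alpha))"
  proof (rule sum_mono)
    fix x
    have "\<bar>\<Sum>s\<in>UNIV. d s * (pmf (K s) x - alpha)\<bar> \<le> (\<Sum>s\<in>UNIV. \<bar>d s * (pmf (K s) x - alpha)\<bar>)"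
      by (rule sum_abs)
    also have "\<dots> = (\<Sum>s\<in>UNIV. \<bar>d s\<bar> * (pmf (K s) x - alpha))"
      using low by (intro sum.cong) (auto simp: abs_mult)
    finally show "\<bar>pmf (bind_pmf mu K) x - pmf (bind_pmf nu K) x\<bar> \<le> (\<Sum>s\<in>UNIV. \<bar>d s\<bar> * (pmf (K s) x - alpha))"
      using eq by simp
  qed
  also have "\<dots> = (\<Sum>s\<in>UNIV. \<bar>d s\<bar> * (\<Sum>x\<in>UNIV. (pmf (K s) x - alpha)))"
    by (subst sum.swap) (simp add: sum_distrib_left)
  also have "\<dots> = (\<Sum>s\<in>UNIV. \<bar>d s\<bar> * (1 - real CARD('s) * alpha))"
    by (simp add: sum_subtractf sum_pmf_univ)
  also have "\<dots> = (1 - real CARD('s) * alpha) * (\<Sum>s\<in>UNIV. \<bar>pmf mu s - pmf nu s\<bar>)"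
    by (simp add: d_def sum_distrib_left mult.commute)
  finally show ?thesis .
qed

lemma l1_le_2:
  fixes mu nu :: "'s::finite pmf"
  shows "(\<Sum>s\<in>UNIV. \<bar>pmf mu s - pmf nu s\<bar>) \<le> 2"
proof -
  have "(\<Sum>s\<in>UNIV. \<bar>pmf mu s - pmf nu s\<bar>) \<le> (\<Sum>s\<in>UNIV. pmf mu s + pmf nu s)"
    by (rule sum_mono) (auto simp: abs_if)
  also have "\<dots> = 2" by (simp add: sum.distrib sum_pmf_univ)
  finally show ?thesis .
qed

theorem lemma2:
  fixes P :: "'s::finite \<Rightarrow> 'a::finite \<Rightarrow> 's pmf"
    and pol :: "'s \<Rightarrow> 'a pmf"
    and alpha :: real
    and k tau t :: nat
    and mu0 nu :: "'s pmf"
  assumes alpha_pos: "alpha > 0"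
    and P_lower: "\<forall>s a s'. pmf (P s a) s' \<ge> alpha"
    and k_ge: "k \<ge> 1"
    and stat: "stationary_dist P pol nu"
    and stationary_phase: "real t \<ge> real tau + ln (real k) / (alpha * real CARD('s))"
  shows "(\<Sum>s\<in>UNIV. \<Sum>a\<in>UNIV. \<bar>occupancy (cond_state_dist P pol mu0 tau t) pol s a
                                   - occupancy nu pol s a\<bar>)
           = (\<Sum>s\<in>UNIV. \<bar>pmf (cond_state_dist P pol mu0 tau t) s - pmf nu s\<bar>)
       \<and> (\<Sum>s\<in>UNIV. \<bar>pmf (cond_state_dist P pol mu0 tau t) s - pmf nu s\<bar>) \<le> 2 / sqrt (real k)"
proof
  let ?mu = "cond_state_dist P pol mu0 tau t"
  show "(\<Sum>s\<in>UNIV. \<Sum>a\<in>UNIV. \<bar>occupancy ?mu pol s a - occupancy nu pol s a\<bar>)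
           = (\<Sum>s\<in>UNIV. \<bar>pmf ?mu s - pmf nu s\<bar>)"
  proof (rule sum.cong)
    fix s
    have "(\<Sum>a\<in>UNIV. \<bar>occupancy ?mu pol s a - occupancy nu pol s a\<bar>)
        = (\<Sum>a\<in>UNIV. \<bar>pmf ?mu s - pmf nu s\<bar> * pmf (pol s) a)"
      by (intro sum.cong) (auto simp: occupancy_def abs_mult left_diff_distrib[symmetric])
    also have "\<dots> = \<bar>pmf ?mu s - pmf nu s\<bar>"
      by (simp add: sum_distrib_left[symmetric] sum_pmf_univ)
    finally show "(\<Sum>a\<in>UNIV. \<bar>occupancy ?mu pol s a - occupancy nu pol s a\<bar>) = \<bar>pmf ?mu s - pmf nu s\<bar>" .
  qed simp
  define c where "c = real CARD('s) * alpha"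
  define L where "L n = (\<Sum>s\<in>UNIV. \<bar>pmf ((dist_step P pol ^^ n) mu0) s - pmf nu s\<bar>)" for n
  have low: "\<And>s x. pmf (policy_kernel P pol s) x \<ge> alpha"
    using kernel_lower[OF P_lower] by blast
  have c_le: "c \<le> 1"
  proof -
    obtain s0 :: 's where True by simp
    have "c = (\<Sum>x\<in>(UNIV::'s set). alpha)" by (simp add: c_def)
    also have "\<dots> \<le> (\<Sum>x\<in>UNIV. pmf (policy_kernel P pol s0) x)" by (rule sum_mono) (rule low)
    also have "\<dots> = 1" by (rule sum_pmf_univ)
    finally show ?thesis .
  qed
  have c_pos: "c > 0" using alpha_pos by (simp add: c_def)
  have nu_fix: "(dist_step P pol ^^ n) nu = nu" for n
    by (induction n) (use stat in \<open>auto simp: stationary_dist_def\<close>)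
  have Ln: "L n \<le> (1 - c) ^ n * 2" for n
  proof (induction n)
    case 0 show ?case using l1_le_2 by (simp add: L_def)
  next
    case (Suc n)
    have "L (Suc n) = (\<Sum>s\<in>UNIV. \<bar>pmf (bind_pmf ((dist_step P pol ^^ n) mu0) (policy_kernel P pol)) s
              - pmf (bind_pmf ((dist_step P pol ^^ n) nu) (policy_kernel P pol)) s\<bar>)"
      using stat by (simp add: L_def dist_step_def nu_fix stationary_dist_def)
    also have "\<dots> \<le> (1 - c) * L n"
      unfolding L_def c_def nu_fix using contraction[where K="policy_kernel P pol" and alpha=alpha, OF low] by simp
    also have "\<dots> \<le> (1 - c) * ((1 - c) ^ n * 2)"
      using Suc c_le by (intro mult_left_mono) auto
    finally show ?case by simp
  qed
  define n where "n = t - tau"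
  have ln_nonneg: "ln (real k) \<ge> 0" using k_ge by simp
  have tt: "real t \<ge> real tau"
    using stationary_phase ln_nonneg alpha_pos
    by (smt (verit) divide_nonneg_pos of_nat_0_le_iff mult_pos_pos of_nat_less_0_iff zero_less_card_finite of_nat_0_less_iff)
  hence n_real: "real n = real t - real tau" by (simp add: n_def of_nat_diff)
  have cn: "c * real n \<ge> ln (real k)"
  proof -
    have "ln (real k) / c \<le> real n"
      using stationary_phase n_real by (simp add: c_def mult.commute)
    thus ?thesis using c_pos by (simp add: divide_le_eq mult.commute)
  qed
  have "(1 - c) ^ n \<le> exp (- c) ^ n"
    using c_le exp_ge_add_one_self[of "-c"] by (intro power_mono) auto
  also have "\<dots> = exp (- (c * real n))"
    by (simp add: exp_of_nat_mult[symmetric] mult.commute)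
  also have "\<dots> \<le> exp (- ln (real k))" using cn by simp
  also have "\<dots> = 1 / real k" using k_ge by (simp add: exp_minus inverse_eq_divide)
  finally have pk: "(1 - c) ^ n \<le> 1 / real k" .
  have sk: "1 / real k \<le> 1 / sqrt (real k)"
  proof -
    have "sqrt (real k) \<le> real k"
    proof -
      have "real k \<le> (real k)^2" using k_ge by (simp add: power2_eq_square)
      hence "sqrt (real k) \<le> sqrt ((real k)^2)" by (rule real_sqrt_le_mono)
      thus ?thesis by simp
    qed
    moreover have "sqrt (real k) > 0" using k_ge by simp
    ultimately show ?thesis by (simp add: frac_le)
  qed
  have "(\<Sum>s\<in>UNIV. \<bar>pmf ?mu s - pmf nu s\<bar>) = L n"
    by (simp add: L_def cond_state_dist_def n_def)
  also have "\<dots> \<le> (1 - c) ^ n * 2" by (rule Ln)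
  also have "\<dots> \<le> 2 / sqrt (real k)" using pk sk by simp
  finally show "(\<Sum>s\<in>UNIV. \<bar>pmf ?mu s - pmf nu s\<bar>) \<le> 2 / sqrt (real k)" .
qed

end
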